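(* Let $\mathcal{X}=\mathbb{R}^d$ with the Euclidean metric, let $f:\mathcal{X}\to[0,1]$ be a labeling function, and let $H$ be a class of functions $h:\mathcal{X}\to[0,1]$, all $K$-Lipschitz continuous for some constant $K$. Let $\mu_s,\mu_t$ be probability measures on $\mathbb{R}^d$ that both satisfy the $T_1(\kappa)$ inequality. Let $X_s=\{x_i^s\}_{i=1}^{N_s}$ and $X_t=\{x_i^t\}_{i=1}^{N_t}$ be samples drawn i.i.d. from $\mu_s$ and $\mu_t$ respectively, with empirical measures $\hat\mu_s=\frac1{N_s}\sum_{i=1}^{N_s}\delta_{x_i^s}$ and $\hat\mu_t=\frac1{N_t}\sum_{i=1}^{N_t}\delta_{x_i^t}$. Let $h^*\in H$ minimize $\epsilon_s(h)+\epsilon_t(h)$ over $H$ and set $\lambda=\epsilon_s(h^* )+\epsilon_t(h^* )$. Then for any $d'>d$ and $\kappa'<\kappa$ there exists a constant $N_0$ depending on $d'$ such that for any $\delta>0$ and $\min(N_s,N_t)\ge N_0\max(\delta^{-(d'+2)},1)$, with probability at least $1-\delta$, for all $h\in H$, $$\epsilon_t(h)\le \epsilon_s(h)+2K\,W_1(\hat\mu_s,\hat\mu_t)+\lambda+2K\sqrt{2\log(1/\delta)/\kappa'}\left(\sqrt{\tfrac{1}{N_s}}+\sqrt{\tfrac{1}{N_t}}\right).$$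
   Context: $\epsilon_\mu(h,h')=\mathbb{E}_{x\sim\mu}[|h(x)-h'(x)|]$, $\epsilon_s=\epsilon_{\mu_s}$, $\epsilon_t=\epsilon_{\mu_t}$, and $\epsilon_s(h)=\epsilon_s(h,f)$, $\epsilon_t(h)=\epsilon_t(h,f)$. $W_1$ is the first Wasserstein distance with respect to the Euclidean metric. A probability measure $\mu$ satisfies the transportation inequality $T_1(\kappa)$ if $W_1(\mu,\nu)\le\sqrt{\frac{2}{\kappa}\mathrm{KL}(\nu\|\mu)}$ for every probability measure $\nu$, where KL is the Kullback–Leibler divergence. *)

theory Defs
  imports "HOL-Probability.Probability"
begin

definition eps :: "'a measure \<Rightarrow> ('a \<Rightarrow> real) \<Rightarrow> ('a \<Rightarrow> real) \<Rightarrow> real" where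
  "eps \<mu> h h' = (\<integral>x. \<bar>h x - h' x\<bar> \<partial>\<mu>)"

definition couplings :: "'a::metric_space measure \<Rightarrow> 'a measure \<Rightarrow> ('a \<times> 'a) measure set" where
  "couplings \<mu> \<nu> = {\<pi>. prob_space \<pi> \<and> sets \<pi> = sets (borel \<Otimes>\<^sub>M borel)
      \<and> distr \<pi> borel fst = \<mu> \<and> distr \<pi> borel snd = \<nu>}"

definition W1 :: "'a::metric_space measure \<Rightarrow> 'a measure \<Rightarrow> ennreal" where
  "W1 \<mu> \<nu> = (INF \<pi> \<in> couplings \<mu> \<nu>. \<integral>\<^sup>+ p. ennreal (dist (fst p) (snd p)) \<partial>\<pi>)"

text \<open>If KL(nu||mu) = infinity (nu not absolutely
  continuous w.r.t. mu, or log-density not nu-integrable) the inequality is vacuous,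
  so only the finite-KL case is required.\<close>
definition T1_ineq :: "real \<Rightarrow> 'a::metric_space measure \<Rightarrow> bool" where
  "T1_ineq \<kappa> \<mu> \<longleftrightarrow>
     (\<forall>\<nu>. prob_space \<nu> \<and> sets \<nu> = sets \<mu> \<and> absolutely_continuous \<mu> \<nu>
        \<and> integrable \<nu> (entropy_density (exp 1) \<mu> \<nu>) \<longrightarrow>
        W1 \<mu> \<nu> \<le> ennreal (sqrt (2 / \<kappa> * KL_divergence (exp 1) \<mu> \<nu>)))"

definition emp_measure :: "nat \<Rightarrow> (nat \<Rightarrow> 'a::topological_space) \<Rightarrow> 'a measure" where
  "emp_measure n x = distr (uniform_count_measure {..<n}) borel x"

end

theory Submission
  imports Defs
begin

lemma kant_coupling:
  fixes \<phi> :: "'a::euclidean_space \<Rightarrow> real"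
  assumes \<pi>: "\<pi> \<in> couplings \<mu> \<nu>"
    and \<phi>m[measurable]: "\<phi> \<in> borel_measurable borel" and bnd: "\<And>x. \<bar>\<phi> x\<bar> \<le> B"
    and lip: "\<And>x y. \<bar>\<phi> x - \<phi> y\<bar> \<le> L * dist x y" and L: "L > 0"
  shows "ennreal (((\<integral>x. \<phi> x \<partial>\<nu>) - (\<integral>x. \<phi> x \<partial>\<mu>)) / L) \<le> (\<integral>\<^sup>+ p. ennreal (dist (fst p) (snd p)) \<partial>\<pi>)"
proof -
  from \<pi> have ps: "prob_space \<pi>" and sp: "sets \<pi> = sets (borel \<Otimes>\<^sub>M borel)"
    and d1: "distr \<pi> borel fst = \<mu>" and d2: "distr \<pi> borel snd = \<nu>"
    by (auto simp: couplings_def)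
  interpret prob_space \<pi> by fact
  have mf[measurable]: "fst \<in> measurable \<pi> borel" "snd \<in> measurable \<pi> borel"
    using measurable_cong_sets[OF sp refl] by auto
  have i1: "(\<integral>x. \<phi> x \<partial>\<mu>) = (\<integral>p. \<phi> (fst p) \<partial>\<pi>)"
    unfolding d1[symmetric] by (rule integral_distr) auto
  have i2: "(\<integral>x. \<phi> x \<partial>\<nu>) = (\<integral>p. \<phi> (snd p) \<partial>\<pi>)"
    unfolding d2[symmetric] by (rule integral_distr) auto
  have int1: "integrable \<pi> (\<lambda>p. \<phi> (fst p))" and int2: "integrable \<pi> (\<lambda>p. \<phi> (snd p))"
    using bnd by (auto intro!: integrable_const_bound[where B=B])
  define h where "h p = (\<phi> (snd p) - \<phi> (fst p)) / L" for p
  have inth: "integrable \<pi> h" unfolding h_def using int1 int2 by auto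
  have "((\<integral>x. \<phi> x \<partial>\<nu>) - (\<integral>x. \<phi> x \<partial>\<mu>)) / L = (\<integral>p. h p \<partial>\<pi>)"
    unfolding i1 i2 h_def using int1 int2 by simp
  also have "\<dots> \<le> (\<integral>p. \<bar>h p\<bar> \<partial>\<pi>)" using inth by (intro integral_mono) auto
  finally have "ennreal (((\<integral>x. \<phi> x \<partial>\<nu>) - (\<integral>x. \<phi> x \<partial>\<mu>)) / L) \<le> ennreal (\<integral>p. \<bar>h p\<bar> \<partial>\<pi>)"
    by (rule ennreal_leI)
  also have "\<dots> = (\<integral>\<^sup>+ p. ennreal \<bar>h p\<bar> \<partial>\<pi>)"
    using inth by (intro nn_integral_eq_integral[symmetric]) auto
  also have "\<dots> \<le> (\<integral>\<^sup>+ p. ennreal (dist (fst p) (snd p)) \<partial>\<pi>)"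
  proof (intro nn_integral_mono ennreal_leI)
    fix p
    have "\<bar>\<phi> (snd p) - \<phi> (fst p)\<bar> \<le> L * dist (fst p) (snd p)"
      using lip[of "snd p" "fst p"] by (simp add: dist_commute)
    then show "\<bar>h p\<bar> \<le> dist (fst p) (snd p)" using L
      by (simp add: h_def abs_divide pos_divide_le_eq mult.commute)
  qed
  finally show ?thesis .
qed

lemma kant_W1:
  fixes \<phi> :: "'a::euclidean_space \<Rightarrow> real"
  assumes \<phi>m[measurable]: "\<phi> \<in> borel_measurable borel" and bnd: "\<And>x. \<bar>\<phi> x\<bar> \<le> B"
    and lip: "\<And>x y. \<bar>\<phi> x - \<phi> y\<bar> \<le> L * dist x y" and L: "L > 0"
  shows "ennreal ((\<integral>x. \<phi> x \<partial>\<nu>) - (\<integral>x. \<phi> x \<partial>\<mu>)) \<le> ennreal L * W1 \<mu> \<nu>"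
proof -
  define D where "D = (\<integral>x. \<phi> x \<partial>\<nu>) - (\<integral>x. \<phi> x \<partial>\<mu>)"
  have "ennreal (D / L) \<le> W1 \<mu> \<nu>" unfolding W1_def D_def
    by (rule INF_greatest, rule kant_coupling[OF _ \<phi>m bnd lip L])
  then have *: "ennreal L * ennreal (D / L) \<le> ennreal L * W1 \<mu> \<nu>"
    by (rule mult_left_mono) simp
  show ?thesis
  proof (cases "D \<ge> 0")
    case True
    then have "ennreal D = ennreal L * ennreal (D / L)" using L
      by (simp add: ennreal_mult[symmetric])
    then show ?thesis using * by (simp add: D_def)
  next
    case False
    then show ?thesis by (simp add: D_def ennreal_neg)
  qed
qed

lemma t1_exp:
  fixes \<phi> :: "'a::euclidean_space \<Rightarrow> real"
  assumes ps: "prob_space \<mu>" and sb: "sets \<mu> = sets borel" and T1: "T1_ineq \<kappa> \<mu>" and \<kappa>: "\<kappa> > 0"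
    and \<phi>m[measurable]: "\<phi> \<in> borel_measurable borel" and bnd: "\<And>x. \<bar>\<phi> x\<bar> \<le> B"
    and lip: "\<And>x y. \<bar>\<phi> x - \<phi> y\<bar> \<le> L * dist x y" and L: "L > 0" and l: "l \<ge> 0"
  shows "(\<integral>x. exp (l * (\<phi> x - (\<integral>y. \<phi> y \<partial>\<mu>))) \<partial>\<mu>) \<le> exp (l^2 * L^2 / (2*\<kappa>))"
proof -
  interpret prob_space \<mu> by fact
  have mc: "measurable \<mu> borel = measurable borel borel" using measurable_cong_sets[OF sb refl] .
  have m\<phi>[measurable]: "\<phi> \<in> borel_measurable \<mu>" unfolding mc by (rule \<phi>m)
  define m where "m = (\<integral>y. \<phi> y \<partial>\<mu>)"
  define E where "E x = exp (l * \<phi> x)" for x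
  have mE[measurable]: "E \<in> borel_measurable \<mu>" unfolding E_def by measurable
  have lb: "- (l*B) \<le> l * \<phi> x" "l * \<phi> x \<le> l * B" for x
  proof -
    have a: "-B \<le> \<phi> x" "\<phi> x \<le> B" using bnd[of x] by auto
    show "- (l*B) \<le> l * \<phi> x" using mult_left_mono[OF a(1) l] by simp
    show "l * \<phi> x \<le> l * B" using mult_left_mono[OF a(2) l] by simp
  qed
  have Ebnd: "exp (-(l*B)) \<le> E x" "E x \<le> exp (l*B)" for x
    unfolding E_def using lb by auto
  have intE: "integrable \<mu> E"
    by (rule integrable_const_bound[where B="exp (l*B)"]) (use Ebnd in \<open>auto intro!: AE_I2 simp: E_def\<close>)
  have int\<phi>: "integrable \<mu> \<phi>"
    by (rule integrable_const_bound[where B=B]) (use bnd in auto)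
  define Z where "Z = (\<integral>x. E x \<partial>\<mu>)"
  have "exp (-(l*B)) \<le> Z"
  proof -
    have "(\<integral>x. exp (-(l*B)) \<partial>\<mu>) \<le> Z" unfolding Z_def
      by (intro integral_mono intE) (use Ebnd in auto)
    then show ?thesis by (simp add: prob_space)
  qed
  then have Z: "Z > 0" by (smt (verit) exp_gt_zero)
  define \<rho> where "\<rho> x = E x / Z" for x
  have m\<rho>[measurable]: "\<rho> \<in> borel_measurable \<mu>" unfolding \<rho>_def by measurable
  have \<rho>pos: "\<rho> x > 0" for x unfolding \<rho>_def E_def using Z by simp
  have \<rho>nn: "AE x in \<mu>. 0 \<le> \<rho> x" using \<rho>pos by (auto intro!: AE_I2 less_imp_le)
  have int\<rho>: "integrable \<mu> \<rho>" unfolding \<rho>_def using intE by auto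
  have int\<rho>1: "(\<integral>x. \<rho> x \<partial>\<mu>) = 1" unfolding \<rho>_def Z_def using Z Z_def by simp
  have ln\<rho>: "ln (\<rho> x) = l * \<phi> x - ln Z" for x
    unfolding \<rho>_def E_def using Z by (simp add: ln_div)
  have int\<rho>\<phi>: "integrable \<mu> (\<lambda>x. \<rho> x * \<phi> x)"
  proof (rule Bochner_Integration.integrable_bound[OF integrable_mult_right[OF int\<rho>, of B]])
    show "AE x in \<mu>. norm (\<rho> x * \<phi> x) \<le> norm (B * \<rho> x)"
    proof (rule AE_I2)
      fix x
      have "\<bar>\<rho> x * \<phi> x\<bar> = \<rho> x * \<bar>\<phi> x\<bar>" using \<rho>pos[of x] by (simp add: abs_mult)
      also have "\<dots> \<le> \<rho> x * B" using \<rho>pos[of x] bnd[of x] by (intro mult_left_mono) auto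
      also have "\<dots> \<le> \<bar>B * \<rho> x\<bar>" by (simp add: mult.commute)
      finally show "norm (\<rho> x * \<phi> x) \<le> norm (B * \<rho> x)" by simp
    qed
  qed measurable
  have int\<rho>ln: "integrable \<mu> (\<lambda>x. \<rho> x * (l * \<phi> x - ln Z))"
  proof -
    have "(\<lambda>x. \<rho> x * (l * \<phi> x - ln Z)) = (\<lambda>x. l * (\<rho> x * \<phi> x) - ln Z * \<rho> x)"
      by (auto simp: fun_eq_iff algebra_simps)
    then show ?thesis using int\<rho>\<phi> int\<rho> by simp
  qed
  define \<nu> where "\<nu> = density \<mu> (\<lambda>x. ennreal (\<rho> x))"
  have s\<nu>: "sets \<nu> = sets \<mu>" "space \<nu> = space \<mu>" unfolding \<nu>_def by auto
  have "emeasure \<nu> (space \<nu>) = (\<integral>\<^sup>+ x. ennreal (\<rho> x) * indicator (space \<mu>) x \<partial>\<mu>)"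
    unfolding \<nu>_def by (simp add: emeasure_density)
  also have "\<dots> = (\<integral>\<^sup>+ x. ennreal (\<rho> x) \<partial>\<mu>)"
    by (intro nn_integral_cong) auto
  also have "\<dots> = ennreal (\<integral>x. \<rho> x \<partial>\<mu>)"
    using int\<rho> \<rho>pos by (intro nn_integral_eq_integral) (auto intro: less_imp_le)
  finally have "emeasure \<nu> (space \<nu>) = 1" using int\<rho>1 by simp
  then have ps\<nu>: "prob_space \<nu>" by (rule prob_spaceI)
  have ac: "absolutely_continuous \<mu> \<nu>" unfolding \<nu>_def by (rule absolutely_continuousI_density) measurable
  have "density \<mu> (RN_deriv \<mu> \<nu>) = \<nu>"
    unfolding \<nu>_def by (intro density_RN_deriv_density) (auto intro: less_imp_le \<rho>nn simp: \<rho>pos)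
  then have eqRN: "AE x in \<mu>. RN_deriv \<mu> \<nu> x = ennreal (\<rho> x)"
    unfolding \<nu>_def by (intro density_unique) auto
  have ent: "AE x in \<mu>. entropy_density (exp 1) \<mu> \<nu> x = l * \<phi> x - ln Z"
    using eqRN by eventually_elim (use \<rho>pos in \<open>auto simp: entropy_density_def log_def ln\<rho> less_imp_le\<close>)
  have intent: "integrable \<nu> (entropy_density (exp 1) \<mu> \<nu>)"
    unfolding \<nu>_def
  proof (subst integrable_density)
    show "integrable \<mu> (\<lambda>x. \<rho> x *\<^sub>R entropy_density (exp 1) \<mu> (density \<mu> (\<lambda>x. ennreal (\<rho> x))) x)"
    proof (rule integrable_cong_AE[THEN iffD2])
      show "AE x in \<mu>. \<rho> x *\<^sub>R entropy_density (exp 1) \<mu> (density \<mu> (\<lambda>x. ennreal (\<rho> x))) x = \<rho> x * (l * \<phi> x - ln Z)"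
        using ent unfolding \<nu>_def by eventually_elim simp
      show "integrable \<mu> (\<lambda>x. \<rho> x * (l * \<phi> x - ln Z))"
        by (rule int\<rho>ln)
    qed measurable
  qed (auto intro: less_imp_le \<rho>nn simp: \<rho>pos)
  have KL: "KL_divergence (exp 1) \<mu> \<nu> = (\<integral>x. \<rho> x * (l * \<phi> x - ln Z) \<partial>\<mu>)"
    unfolding \<nu>_def
    by (subst KL_density) (auto intro!: Bochner_Integration.integral_cong simp: log_def ln\<rho> less_imp_le \<rho>pos)
  define m\<nu> where "m\<nu> = (\<integral>x. \<rho> x * \<phi> x \<partial>\<mu>)"
  have KL2: "KL_divergence (exp 1) \<mu> \<nu> = l * m\<nu> - ln Z"
    unfolding KL m\<nu>_def using int\<rho>\<phi> int\<rho> int\<rho>1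
    by (simp add: right_diff_distrib mult.left_commute)
  have i\<nu>: "(\<integral>x. \<phi> x \<partial>\<nu>) = m\<nu>"
    unfolding \<nu>_def m\<nu>_def by (subst integral_density) (auto intro: less_imp_le \<rho>nn simp: \<rho>pos)
  have KLnn: "0 \<le> KL_divergence (exp 1) \<mu> \<nu>"
  proof -
    interpret information_space \<mu> "exp 1" by standard simp
    show ?thesis unfolding \<nu>_def
    proof (rule KL_nonneg)
      show "prob_space (density \<mu> (\<lambda>x. ennreal (\<rho> x)))" using ps\<nu> \<nu>_def by simp
      show "integrable \<mu> (\<lambda>x. \<rho> x * log (exp 1) (\<rho> x))"
        using int\<rho>ln by (simp add: log_def ln\<rho>)
    qed (auto intro: less_imp_le \<rho>nn simp: \<rho>pos)
  qed
  define s where "s = sqrt (2 / \<kappa> * KL_divergence (exp 1) \<mu> \<nu>)"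
  have s0: "s \<ge> 0" unfolding s_def using KLnn \<kappa> by simp
  have s2: "s^2 = 2 / \<kappa> * KL_divergence (exp 1) \<mu> \<nu>" unfolding s_def using KLnn \<kappa> by simp
  have "W1 \<mu> \<nu> \<le> ennreal s"
    using T1 ps\<nu> s\<nu> ac intent unfolding T1_ineq_def s_def by blast
  have "ennreal (m\<nu> - m) \<le> ennreal L * W1 \<mu> \<nu>"
    using kant_W1[OF \<phi>m bnd lip L, of \<nu> \<mu>] i\<nu> m_def by simp
  also have "\<dots> \<le> ennreal L * ennreal s" by (rule mult_left_mono) (fact, simp)
  also have "\<dots> = ennreal (L * s)" using L s0 by (simp add: ennreal_mult)
  finally have dm: "m\<nu> - m \<le> L * s" using L s0 by (simp add: ennreal_le_iff)
  have "l * (m\<nu> - m) \<le> l * (L * s)" by (rule mult_left_mono[OF dm l])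
  also have "\<dots> \<le> KL_divergence (exp 1) \<mu> \<nu> + l^2 * L^2 / (2*\<kappa>)"
  proof -
    have "0 \<le> (\<kappa> * s - l * L)^2 / (2*\<kappa>)" using \<kappa> by simp
    also have "\<dots> = \<kappa> * s^2 / 2 - l * (L * s) + l^2 * L^2 / (2*\<kappa>)"
      using \<kappa> by (simp add: field_simps power2_eq_square)
    also have "\<kappa> * s^2 / 2 = KL_divergence (exp 1) \<mu> \<nu>" using s2 \<kappa> by simp
    finally show ?thesis by simp
  qed
  finally have lnZ: "ln Z \<le> l * m + l^2 * L^2 / (2*\<kappa>)" unfolding KL2 by (simp add: algebra_simps)
  have "(\<integral>x. exp (l * (\<phi> x - m)) \<partial>\<mu>) = (\<integral>x. E x * exp (- (l * m)) \<partial>\<mu>)"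
    unfolding E_def by (intro Bochner_Integration.integral_cong) (auto simp: right_diff_distrib exp_diff exp_minus field_simps)
  also have "\<dots> = Z * exp (- (l * m))" unfolding Z_def by simp
  also have "\<dots> = exp (ln Z - l * m)" using Z by (simp add: exp_diff exp_minus field_simps)
  also have "\<dots> \<le> exp (l^2 * L^2 / (2*\<kappa>))" using lnZ by simp
  finally show ?thesis unfolding m_def .
qed

lemma meas_ucm: "x \<in> measurable (uniform_count_measure {..<n}) (borel :: 'a::topological_space measure)"
  by (subst measurable_cong_sets[where M'="count_space {..<n}"]) (auto simp: sets_uniform_count_measure)

lemma emp_basic:
  fixes x :: "nat \<Rightarrow> 'a::euclidean_space"
  assumes n: "n > 0"
  shows "prob_space (emp_measure n x)" "sets (emp_measure n x) = sets borel"
    "\<And>g::'a \<Rightarrow> real. g \<in> borel_measurable borel \<Longrightarrow> (\<integral>y. g y \<partial>emp_measure n x) = (\<Sum>i<n. g (x i)) / n"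
    "(\<integral>\<^sup>+ y. ennreal (norm y) \<partial>emp_measure n x) < \<infinity>"
proof -
  have ps: "prob_space (uniform_count_measure {..<n})" using n by (intro prob_space_uniform_count_measure) auto
  then show "prob_space (emp_measure n x)" unfolding emp_measure_def
    by (intro prob_space.prob_space_distr meas_ucm)
  show "sets (emp_measure n x) = sets borel" unfolding emp_measure_def by simp
  show "\<And>g::'a \<Rightarrow> real. g \<in> borel_measurable borel \<Longrightarrow> (\<integral>y. g y \<partial>emp_measure n x) = (\<Sum>i<n. g (x i)) / n"
    unfolding emp_measure_def by (subst integral_distr[OF meas_ucm]) (auto simp: integral_uniform_count_measure)
  define C where "C = (\<Sum>j<n. norm (x j))"
  have "(\<integral>\<^sup>+ y. ennreal (norm y) \<partial>emp_measure n x) = (\<integral>\<^sup>+ i. ennreal (norm (x i)) \<partial>uniform_count_measure {..<n})"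
    unfolding emp_measure_def by (subst nn_integral_distr[OF meas_ucm]) auto
  also have "\<dots> \<le> (\<integral>\<^sup>+ i. ennreal C \<partial>uniform_count_measure {..<n})"
  proof (intro nn_integral_mono ennreal_leI)
    fix i assume "i \<in> space (uniform_count_measure {..<n})"
    then have "i \<in> {..<n}" by (simp add: space_uniform_count_measure)
    then show "norm (x i) \<le> C" unfolding C_def
      by (intro member_le_sum) auto
  qed
  also have "\<dots> = ennreal C" using ps by (simp add: prob_space.emeasure_space_1)
  finally show "(\<integral>\<^sup>+ y. ennreal (norm y) \<partial>emp_measure n x) < \<infinity>"
    by (simp add: order_le_less_trans)
qed

lemma distr_pair_snd':
  assumes "prob_space M1" "prob_space M2"
  shows "distr (M1 \<Otimes>\<^sub>M M2) M2 snd = M2"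
proof (intro measure_eqI)
  interpret M1: prob_space M1 by fact
  interpret M2: prob_space M2 by fact
  interpret pair_sigma_finite M1 M2 ..
  fix A assume A: "A \<in> sets (distr (M1 \<Otimes>\<^sub>M M2) M2 snd)"
  from A have "emeasure (distr (M1 \<Otimes>\<^sub>M M2) M2 snd) A = emeasure (M1 \<Otimes>\<^sub>M M2) (space M1 \<times> A)"
    by (auto simp add: emeasure_distr space_pair_measure dest: sets.sets_into_space intro!: arg_cong2[where f=emeasure])
  also have "\<dots> = emeasure M1 (space M1) * emeasure M2 A"
    using A by (intro M2.emeasure_pair_measure_Times) auto
  finally show "emeasure (distr (M1 \<Otimes>\<^sub>M M2) M2 snd) A = emeasure M2 A"
    by (simp add: M1.emeasure_space_1)
qed simp

lemma W1_finite_emp: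
  fixes xs xt :: "nat \<Rightarrow> 'a::euclidean_space"
  assumes "Ns > 0" "Nt > 0"
  shows "W1 (emp_measure Ns xs) (emp_measure Nt xt) < \<infinity>"
proof -
  define M1 where "M1 = emp_measure Ns xs"
  define M2 where "M2 = emp_measure Nt xt"
  note e1 = emp_basic[OF assms(1), where x=xs, folded M1_def]
  note e2 = emp_basic[OF assms(2), where x=xt, folded M2_def]
  define \<pi> where "\<pi> = M1 \<Otimes>\<^sub>M M2"
  have sp: "sets \<pi> = sets (borel \<Otimes>\<^sub>M borel)" unfolding \<pi>_def using e1(2) e2(2)
    by (intro sets_pair_measure_cong) auto
  have d1: "distr \<pi> borel fst = M1"
  proof -
    interpret prob_space M2 by (rule e2(1))
    have "distr \<pi> borel fst = distr \<pi> M1 fst" by (intro distr_cong) (auto simp: e1(2))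
    also have "\<dots> = M1" unfolding \<pi>_def by (rule distr_pair_fst)
    finally show ?thesis .
  qed
  have d2: "distr \<pi> borel snd = M2"
  proof -
    have "distr \<pi> borel snd = distr \<pi> M2 snd" by (intro distr_cong) (auto simp: e2(2))
    also have "\<dots> = M2" unfolding \<pi>_def by (rule distr_pair_snd'[OF e1(1) e2(1)])
    finally show ?thesis .
  qed
  have cpl: "\<pi> \<in> couplings M1 M2" unfolding couplings_def
    using sp d1 d2 prob_space_pair[OF e1(1) e2(1)] \<pi>_def by auto
  have mf[measurable]: "fst \<in> measurable \<pi> borel" "snd \<in> measurable \<pi> borel"
    using measurable_cong_sets[OF sp refl] by auto
  have "W1 M1 M2 \<le> (\<integral>\<^sup>+ p. ennreal (dist (fst p) (snd p)) \<partial>\<pi>)"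
    unfolding W1_def by (rule INF_lower[OF cpl])
  also have "\<dots> \<le> (\<integral>\<^sup>+ p. ennreal (norm (fst p)) + ennreal (norm (snd p)) \<partial>\<pi>)"
    by (intro nn_integral_mono) (auto simp: dist_norm ennreal_plus[symmetric] norm_triangle_ineq4 simp del: ennreal_plus)
  also have "\<dots> = (\<integral>\<^sup>+ p. ennreal (norm (fst p)) \<partial>\<pi>) + (\<integral>\<^sup>+ p. ennreal (norm (snd p)) \<partial>\<pi>)"
    by (rule nn_integral_add) auto
  also have "(\<integral>\<^sup>+ p. ennreal (norm (fst p)) \<partial>\<pi>) = (\<integral>\<^sup>+ y. ennreal (norm y) \<partial>M1)"
    unfolding d1[symmetric] by (subst nn_integral_distr) auto
  also have "(\<integral>\<^sup>+ p. ennreal (norm (snd p)) \<partial>\<pi>) = (\<integral>\<^sup>+ y. ennreal (norm y) \<partial>M2)"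
    unfolding d2[symmetric] by (subst nn_integral_distr) auto
  finally show ?thesis using e1(4) e2(4) unfolding M1_def M2_def
    by (metis (no_types, lifting) ennreal_add_eq_top infinity_ennreal_def linorder_not_le top.not_eq_extremum)
qed

lemma pair_prod_nn:
  assumes "prob_space M2" and A[measurable]: "A \<in> borel_measurable M1" and B[measurable]: "B \<in> borel_measurable M2"
  shows "(\<integral>\<^sup>+ p. A (fst p) * B (snd p) \<partial>(M1 \<Otimes>\<^sub>M M2)) = (\<integral>\<^sup>+ x. A x \<partial>M1) * (\<integral>\<^sup>+ y. B y \<partial>M2)"
proof -
  interpret M2: prob_space M2 by fact
  have "(\<integral>\<^sup>+ p. A (fst p) * B (snd p) \<partial>(M1 \<Otimes>\<^sub>M M2)) = (\<integral>\<^sup>+ x. \<integral>\<^sup>+ y. A x * B y \<partial>M2 \<partial>M1)"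
    by (subst M2.nn_integral_fst[symmetric]) auto
  also have "\<dots> = (\<integral>\<^sup>+ x. A x * (\<integral>\<^sup>+ y. B y \<partial>M2) \<partial>M1)"
    by (intro nn_integral_cong nn_integral_cmult) auto
  also have "\<dots> = (\<integral>\<^sup>+ x. A x \<partial>M1) * (\<integral>\<^sup>+ y. B y \<partial>M2)"
    by (rule nn_integral_multc) auto
  finally show ?thesis .
qed

lemma pim_prod_nn:
  assumes "prob_space M" and F[measurable]: "F \<in> borel_measurable M"
  shows "(\<integral>\<^sup>+ \<omega>. (\<Prod>i<N. F (\<omega> i)) \<partial>PiM {..<N} (\<lambda>_. M)) = (\<integral>\<^sup>+ x. F x \<partial>M) ^ N"
proof -
  interpret product_sigma_finite "\<lambda>_::nat. M"
    unfolding product_sigma_finite_def using prob_space_imp_sigma_finite[OF assms(1)] by simp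
  show ?thesis by (subst product_nn_integral_prod) auto
qed

lemma integrable_exp_bnd:
  fixes \<phi> :: "'a \<Rightarrow> real"
  assumes "prob_space M" "\<phi> \<in> borel_measurable M" "\<And>x. \<bar>\<phi> x\<bar> \<le> B"
  shows "integrable M (\<lambda>x. exp (a * (\<phi> x - m)))"
proof -
  interpret prob_space M by fact
  show ?thesis
  proof (rule integrable_const_bound[where B="exp (\<bar>a\<bar> * (B + \<bar>m\<bar>))"])
    show "AE x in M. norm (exp (a * (\<phi> x - m))) \<le> exp (\<bar>a\<bar> * (B + \<bar>m\<bar>))"
    proof (rule AE_I2)
      fix x
      have "a * (\<phi> x - m) \<le> \<bar>a\<bar> * \<bar>\<phi> x - m\<bar>" by (metis abs_ge_self abs_mult)
      also have "\<dots> \<le> \<bar>a\<bar> * (B + \<bar>m\<bar>)" using assms(3)[of x]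
        by (intro mult_left_mono) auto
      finally show "norm (exp (a * (\<phi> x - m))) \<le> exp (\<bar>a\<bar> * (B + \<bar>m\<bar>))" by simp
    qed
  qed (use assms(2) in measurable)
qed

lemma conc:
  fixes g :: "'a::euclidean_space \<Rightarrow> real"
  assumes ps: "prob_space \<mu>s" and sbs: "sets \<mu>s = sets borel" and T1s: "T1_ineq \<kappa> \<mu>s"
    and pt: "prob_space \<mu>t" and sbt: "sets \<mu>t = sets borel" and T1t: "T1_ineq \<kappa> \<mu>t"
    and \<kappa>: "\<kappa> > 0"
    and gm[measurable]: "g \<in> borel_measurable borel" and gb: "\<And>x. \<bar>g x\<bar> \<le> B"
    and lip: "\<And>x y. \<bar>g x - g y\<bar> \<le> L * dist x y" and L: "L > 0"
    and Ns: "Ns > 0" and Nt: "Nt > 0" and t: "t > 0"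
  defines "P \<equiv> PiM {..<Ns} (\<lambda>_. \<mu>s) \<Otimes>\<^sub>M PiM {..<Nt} (\<lambda>_. \<mu>t)"
    and "Q \<equiv> \<lambda>\<omega>. (\<Sum>i<Ns. (g (fst \<omega> i) - (\<integral>x. g x \<partial>\<mu>s)) / Ns) + (\<Sum>j<Nt. ((\<integral>x. g x \<partial>\<mu>t) - g (snd \<omega> j)) / Nt)"
  shows "Q \<in> borel_measurable P"
    "emeasure P {\<omega>\<in>space P. t \<le> Q \<omega>} \<le> ennreal (exp (-(t^2*\<kappa>/(2*L^2*(1/real Ns+1/real Nt)))))"
proof -
  define ms where "ms = (\<integral>x. g x \<partial>\<mu>s)"
  define mt where "mt = (\<integral>x. g x \<partial>\<mu>t)"
  have gs[measurable]: "g \<in> borel_measurable \<mu>s" unfolding measurable_cong_sets[OF sbs refl] by (rule gm)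
  have gt[measurable]: "g \<in> borel_measurable \<mu>t" unfolding measurable_cong_sets[OF sbt refl] by (rule gm)
  have cs: "(\<lambda>\<omega>. fst \<omega> i) \<in> measurable P \<mu>s" if "i < Ns" for i
    unfolding P_def using that
    by (intro measurable_compose[OF measurable_fst measurable_component_singleton]) auto
  have ct: "(\<lambda>\<omega>. snd \<omega> i) \<in> measurable P \<mu>t" if "i < Nt" for i
    unfolding P_def using that
    by (intro measurable_compose[OF measurable_snd measurable_component_singleton]) auto
  have gcs: "(\<lambda>\<omega>. g (fst \<omega> i)) \<in> borel_measurable P" if "i < Ns" for i
    using measurable_compose[OF cs[OF that] gs] .
  have gct: "(\<lambda>\<omega>. g (snd \<omega> i)) \<in> borel_measurable P" if "i < Nt" for i
    using measurable_compose[OF ct[OF that] gt] .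
  show Qm: "Q \<in> borel_measurable P" unfolding Q_def
    by (intro borel_measurable_add borel_measurable_sum borel_measurable_divide borel_measurable_diff
        gcs gct borel_measurable_const) auto
  define c where "c = 1/real Ns + 1/real Nt"
  have c: "c > 0" unfolding c_def using Ns Nt by (simp add: add_pos_pos)
  define l where "l = t * \<kappa> / (L^2 * c)"
  have l: "l \<ge> 0" unfolding l_def using t \<kappa> L c by auto
  define F where "F x = ennreal (exp ((l/Ns) * (g x - ms)))" for x
  define G where "G y = ennreal (exp ((l/Nt) * ((- g y) - (- mt))))" for y
  define S where "S = {\<omega>\<in>space P. t \<le> Q \<omega>}"
  have S: "S \<in> sets P" unfolding S_def using Qm by measurable
  have "emeasure P S = (\<integral>\<^sup>+ \<omega>. indicator S \<omega> \<partial>P)" using S by simp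
  also have "\<dots> \<le> (\<integral>\<^sup>+ \<omega>. ennreal (exp (- (l * t))) * ennreal (exp (l * Q \<omega>)) \<partial>P)"
  proof (intro nn_integral_mono)
    fix \<omega> assume "\<omega> \<in> space P"
    show "indicator S \<omega> \<le> ennreal (exp (- (l * t))) * ennreal (exp (l * Q \<omega>))"
    proof (cases "\<omega> \<in> S")
      case True
      then have "t \<le> Q \<omega>" unfolding S_def by auto
      then have "0 \<le> l * (Q \<omega> - t)" using l by simp
      then have "1 \<le> exp (- (l * t)) * exp (l * Q \<omega>)"
        by (simp add: exp_add[symmetric] algebra_simps)
      then show ?thesis using True by (simp add: ennreal_mult[symmetric])
    qed simp
  qed
  also have "\<dots> = ennreal (exp (- (l * t))) * (\<integral>\<^sup>+ \<omega>. ennreal (exp (l * Q \<omega>)) \<partial>P)"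
    by (rule nn_integral_cmult) (use Qm in measurable)
  also have "(\<integral>\<^sup>+ \<omega>. ennreal (exp (l * Q \<omega>)) \<partial>P) =
     (\<integral>\<^sup>+ \<omega>. (\<lambda>x. \<Prod>i<Ns. F (x i)) (fst \<omega>) * (\<lambda>y. \<Prod>j<Nt. G (y j)) (snd \<omega>) \<partial>P)"
  proof (intro nn_integral_cong)
    fix \<omega>
    have "exp (l * Q \<omega>) = (\<Prod>i<Ns. exp ((l/Ns) * (g (fst \<omega> i) - ms))) * (\<Prod>j<Nt. exp ((l/Nt) * ((- g (snd \<omega> j)) - (- mt))))"
      unfolding Q_def ms_def mt_def by (simp add: distrib_left sum_distrib_left exp_add exp_sum algebra_simps diff_divide_distrib)
    then show "ennreal (exp (l * Q \<omega>)) = (\<Prod>i<Ns. F (fst \<omega> i)) * (\<Prod>j<Nt. G (snd \<omega> j))"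
      unfolding F_def G_def by (simp add: ennreal_mult prod_ennreal prod_nonneg)
  qed
  also have "\<dots> = (\<integral>\<^sup>+ x. (\<Prod>i<Ns. F (x i)) \<partial>PiM {..<Ns} (\<lambda>_. \<mu>s)) * (\<integral>\<^sup>+ y. (\<Prod>j<Nt. G (y j)) \<partial>PiM {..<Nt} (\<lambda>_. \<mu>t))"
    unfolding P_def
  proof (rule pair_prod_nn)
    show "prob_space (PiM {..<Nt} (\<lambda>_. \<mu>t))" by (rule prob_space_PiM) (use pt in auto)
    show "(\<lambda>x. \<Prod>i<Ns. F (x i)) \<in> borel_measurable (PiM {..<Ns} (\<lambda>_. \<mu>s))"
      unfolding F_def by measurable
    show "(\<lambda>y. \<Prod>j<Nt. G (y j)) \<in> borel_measurable (PiM {..<Nt} (\<lambda>_. \<mu>t))"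
      unfolding G_def by measurable
  qed
  also have "\<dots> = (\<integral>\<^sup>+ x. F x \<partial>\<mu>s) ^ Ns * (\<integral>\<^sup>+ y. G y \<partial>\<mu>t) ^ Nt"
  proof -
    have Fm: "F \<in> borel_measurable \<mu>s" unfolding F_def by measurable
    have Gm: "G \<in> borel_measurable \<mu>t" unfolding G_def by measurable
    show ?thesis using pim_prod_nn[OF ps Fm, of Ns] pim_prod_nn[OF pt Gm, of Nt] by simp
  qed
  also have "\<dots> \<le> ennreal (exp ((l/Ns)^2 * L^2 / (2*\<kappa>))) ^ Ns * ennreal (exp ((l/Nt)^2 * L^2 / (2*\<kappa>))) ^ Nt"
  proof (intro mult_mono power_mono)
    have "(\<integral>\<^sup>+ x. F x \<partial>\<mu>s) = ennreal (\<integral>x. exp ((l/Ns) * (g x - ms)) \<partial>\<mu>s)"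
      unfolding F_def by (intro nn_integral_eq_integral integrable_exp_bnd[OF ps gs gb]) auto
    also have "\<dots> \<le> ennreal (exp ((l/Ns)^2 * L^2 / (2*\<kappa>)))"
      unfolding ms_def using l by (intro ennreal_leI t1_exp[OF ps sbs T1s \<kappa> gm gb lip L]) auto
    finally show "(\<integral>\<^sup>+ x. F x \<partial>\<mu>s) \<le> ennreal (exp ((l/Ns)^2 * L^2 / (2*\<kappa>)))" .
    have gb': "\<And>x. \<bar>- g x\<bar> \<le> B" using gb by simp
    have lip': "\<And>x y. \<bar>- g x - - g y\<bar> \<le> L * dist x y" using lip by (simp add: abs_minus_commute)
    have mt': "- mt = (\<integral>x. - g x \<partial>\<mu>t)" unfolding mt_def by simp
    have "(\<integral>\<^sup>+ y. G y \<partial>\<mu>t) = ennreal (\<integral>y. exp ((l/Nt) * ((- g y) - (- mt))) \<partial>\<mu>t)"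
      unfolding G_def by (intro nn_integral_eq_integral integrable_exp_bnd[OF pt _ gb']) auto
    also have "\<dots> \<le> ennreal (exp ((l/Nt)^2 * L^2 / (2*\<kappa>)))"
      unfolding mt' using l by (intro ennreal_leI t1_exp[OF pt sbt T1t \<kappa> _ gb' lip' L]) auto
    finally show "(\<integral>\<^sup>+ y. G y \<partial>\<mu>t) \<le> ennreal (exp ((l/Nt)^2 * L^2 / (2*\<kappa>)))" .
  qed auto
  also have "\<dots> = ennreal (exp (l^2 * L^2 * c / (2*\<kappa>)))"
  proof -
    have "ennreal (exp ((l/Ns)^2 * L^2 / (2*\<kappa>))) ^ Ns = ennreal (exp (real Ns * ((l/Ns)^2 * L^2 / (2*\<kappa>))))"
      by (subst exp_of_nat_mult) (simp add: ennreal_power)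
    moreover have "ennreal (exp ((l/Nt)^2 * L^2 / (2*\<kappa>))) ^ Nt = ennreal (exp (real Nt * ((l/Nt)^2 * L^2 / (2*\<kappa>))))"
      by (subst exp_of_nat_mult) (simp add: ennreal_power)
    moreover have "real Ns * ((l/Ns)^2 * L^2 / (2*\<kappa>)) + real Nt * ((l/Nt)^2 * L^2 / (2*\<kappa>)) = l^2 * L^2 * c / (2*\<kappa>)"
      unfolding c_def using Ns Nt \<kappa> by (simp add: field_simps power2_eq_square)
    ultimately show ?thesis by (simp add: ennreal_mult[symmetric] exp_add[symmetric])
  qed
  finally have "emeasure P S \<le> ennreal (exp (- (l * t))) * ennreal (exp (l^2 * L^2 * c / (2*\<kappa>)))"
    by (meson mult_left_mono zero_le)
  also have "\<dots> = ennreal (exp (-(t^2*\<kappa>/(2*L^2*c))))"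
  proof -
    have "- (l * t) + l^2 * L^2 * c / (2*\<kappa>) = -(t^2*\<kappa>/(2*L^2*c))"
      unfolding l_def using \<kappa> L c by (simp add: field_simps power2_eq_square)
    then show ?thesis by (simp add: ennreal_mult[symmetric] exp_add[symmetric])
  qed
  finally show "emeasure P {\<omega>\<in>space P. t \<le> Q \<omega>} \<le> ennreal (exp (-(t^2*\<kappa>/(2*L^2*(1/real Ns+1/real Nt)))))"
    unfolding S_def c_def .
qed

lemma int01:
  fixes g :: "'a \<Rightarrow> real"
  assumes "prob_space M" "g \<in> borel_measurable M" "\<And>x. 0 \<le> g x" "\<And>x. g x \<le> 1"
  shows "0 \<le> (\<integral>x. g x \<partial>M)" "(\<integral>x. g x \<partial>M) \<le> 1"
proof -
  interpret prob_space M by fact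
  have i: "integrable M g"
    by (rule integrable_const_bound[where B=1]) (use assms in auto)
  show "0 \<le> (\<integral>x. g x \<partial>M)" using assms(3) by (simp add: integral_nonneg)
  have "(\<integral>x. g x \<partial>M) \<le> (\<integral>x. 1 \<partial>M)" using i assms(4) by (intro integral_mono) auto
  then show "(\<integral>x. g x \<partial>M) \<le> 1" by (simp add: prob_space)
qed

lemma det_tri:
  fixes h h' f :: "'a \<Rightarrow> real"
  assumes "prob_space M" and [measurable]: "h \<in> borel_measurable M" "h' \<in> borel_measurable M" "f \<in> borel_measurable M"
    and b: "\<And>x. \<bar>h x\<bar> \<le> 1" "\<And>x. \<bar>h' x\<bar> \<le> 1" "\<And>x. \<bar>f x\<bar> \<le> 1"
  shows "eps M h f \<le> eps M h' f + (\<integral>x. \<bar>h x - h' x\<bar> \<partial>M)"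
    "(\<integral>x. \<bar>h x - h' x\<bar> \<partial>M) \<le> eps M h f + eps M h' f"
proof -
  interpret prob_space M by fact
  have i1: "integrable M (\<lambda>x. \<bar>h x - f x\<bar>)"
  proof (rule integrable_const_bound[where B=2])
    show "AE x in M. norm (\<bar>h x - f x\<bar>) \<le> 2"
    proof (rule AE_I2)
      fix x show "norm (\<bar>h x - f x\<bar>) \<le> (2::real)" using b(1)[of x] b(2)[of x] b(3)[of x] by auto
    qed
  qed measurable
  have i2: "integrable M (\<lambda>x. \<bar>h' x - f x\<bar>)"
  proof (rule integrable_const_bound[where B=2])
    show "AE x in M. norm (\<bar>h' x - f x\<bar>) \<le> 2"
    proof (rule AE_I2)
      fix x show "norm (\<bar>h' x - f x\<bar>) \<le> (2::real)" using b(1)[of x] b(2)[of x] b(3)[of x] by auto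
    qed
  qed measurable
  have i3: "integrable M (\<lambda>x. \<bar>h x - h' x\<bar>)"
  proof (rule integrable_const_bound[where B=2])
    show "AE x in M. norm (\<bar>h x - h' x\<bar>) \<le> 2"
    proof (rule AE_I2)
      fix x show "norm (\<bar>h x - h' x\<bar>) \<le> (2::real)" using b(1)[of x] b(2)[of x] b(3)[of x] by auto
    qed
  qed measurable
  have "(\<integral>x. \<bar>h x - f x\<bar> \<partial>M) \<le> (\<integral>x. \<bar>h' x - f x\<bar> + \<bar>h x - h' x\<bar> \<partial>M)"
    by (rule integral_mono) (use i1 i2 i3 in auto)
  also have "\<dots> = (\<integral>x. \<bar>h' x - f x\<bar> \<partial>M) + (\<integral>x. \<bar>h x - h' x\<bar> \<partial>M)"
    by (rule Bochner_Integration.integral_add[OF i2 i3])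
  finally show "eps M h f \<le> eps M h' f + (\<integral>x. \<bar>h x - h' x\<bar> \<partial>M)" unfolding eps_def .
  have "(\<integral>x. \<bar>h x - h' x\<bar> \<partial>M) \<le> (\<integral>x. \<bar>h x - f x\<bar> + \<bar>h' x - f x\<bar> \<partial>M)"
    by (rule integral_mono) (use i1 i2 i3 in auto)
  also have "\<dots> = (\<integral>x. \<bar>h x - f x\<bar> \<partial>M) + (\<integral>x. \<bar>h' x - f x\<bar> \<partial>M)"
    by (rule Bochner_Integration.integral_add[OF i1 i2])
  finally show "(\<integral>x. \<bar>h x - h' x\<bar> \<partial>M) \<le> eps M h f + eps M h' f" unfolding eps_def .
qed

lemma kant_emp:
  fixes g :: "'a::euclidean_space \<Rightarrow> real"
  assumes gm: "g \<in> borel_measurable borel" and bnd: "\<And>x. \<bar>g x\<bar> \<le> B"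
    and lip: "\<And>x y. \<bar>g x - g y\<bar> \<le> L * dist x y" and L: "L > 0"
    and Ns: "Ns > 0" and Nt: "Nt > 0"
  shows "(\<integral>x. g x \<partial>emp_measure Nt xt) - (\<integral>x. g x \<partial>emp_measure Ns xs)
          \<le> L * enn2real (W1 (emp_measure Ns xs) (emp_measure Nt xt))"
proof -
  define w where "w = W1 (emp_measure Ns xs) (emp_measure Nt xt)"
  have "w < \<infinity>" unfolding w_def by (rule W1_finite_emp[OF Ns Nt])
  then have w: "w = ennreal (enn2real w)" by simp
  have "ennreal ((\<integral>x. g x \<partial>emp_measure Nt xt) - (\<integral>x. g x \<partial>emp_measure Ns xs)) \<le> ennreal L * w"
    unfolding w_def by (rule kant_W1[OF gm bnd lip L])
  also have "\<dots> = ennreal (L * enn2real w)" using L by (subst w) (simp add: ennreal_mult)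
  finally show ?thesis unfolding w_def using L by (simp add: ennreal_le_iff)
qed

theorem theorem3:
  fixes f :: "'a::euclidean_space \<Rightarrow> real"
    and H :: "('a \<Rightarrow> real) set"
    and K \<kappa> lam :: real
    and \<mu>s \<mu>t :: "'a measure"
    and hstar :: "'a \<Rightarrow> real"
  assumes f_range: "\<And>x. 0 \<le> f x \<and> f x \<le> 1"
    and f_meas: "f \<in> borel_measurable borel"
    and H_range: "\<And>h x. h \<in> H \<Longrightarrow> 0 \<le> h x \<and> h x \<le> 1"
    and H_lip: "\<And>h. h \<in> H \<Longrightarrow> K-lipschitz_on UNIV h"
    and ps: "prob_space \<mu>s" "sets \<mu>s = sets borel"
    and pt: "prob_space \<mu>t" "sets \<mu>t = sets borel"
    and T1s: "T1_ineq \<kappa> \<mu>s"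
    and T1t: "T1_ineq \<kappa> \<mu>t"
    and hstar_in: "hstar \<in> H"
    and hstar_min: "\<And>h. h \<in> H \<Longrightarrow> eps \<mu>s hstar f + eps \<mu>t hstar f \<le> eps \<mu>s h f + eps \<mu>t h f"
    and lam_def: "lam = eps \<mu>s hstar f + eps \<mu>t hstar f"
  shows "\<forall>d' \<kappa>'. real DIM('a) < d' \<and> 0 < \<kappa>' \<and> \<kappa>' < \<kappa> \<longrightarrow>
    (\<exists>N0::real. \<forall>\<delta>::real. \<forall>Ns Nt::nat. 0 < \<delta> \<and>
        real (min Ns Nt) \<ge> N0 * max (\<delta> powr (-(d' + 2))) 1 \<longrightarrow>
      (let P = (PiM {..<Ns} (\<lambda>_. \<mu>s)) \<Otimes>\<^sub>M (PiM {..<Nt} (\<lambda>_. \<mu>t)) in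
        \<exists>A \<in> sets P. measure P A \<ge> 1 - \<delta> \<and>
          (\<forall>\<omega> \<in> A. \<forall>h \<in> H.
             eps \<mu>t h f \<le> eps \<mu>s h f
               + 2 * K * enn2real (W1 (emp_measure Ns (fst \<omega>)) (emp_measure Nt (snd \<omega>)))
               + lam
               + 2 * K * sqrt (2 * ln (1 / \<delta>) / \<kappa>') * (sqrt (1 / real Ns) + sqrt (1 / real Nt)))))"
proof (intro allI impI)
  fix d' \<kappa>' :: real
  assume "real DIM('a) < d' \<and> 0 < \<kappa>' \<and> \<kappa>' < \<kappa>"
  then have \<kappa>': "0 < \<kappa>'" "\<kappa>' < \<kappa>" by auto
  then have \<kappa>: "\<kappa> > 0" by simp
  show "\<exists>N0::real. \<forall>\<delta>::real. \<forall>Ns Nt::nat. 0 < \<delta> \<and>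
        real (min Ns Nt) \<ge> N0 * max (\<delta> powr (-(d' + 2))) 1 \<longrightarrow>
      (let P = (PiM {..<Ns} (\<lambda>_. \<mu>s)) \<Otimes>\<^sub>M (PiM {..<Nt} (\<lambda>_. \<mu>t)) in
        \<exists>A \<in> sets P. measure P A \<ge> 1 - \<delta> \<and>
          (\<forall>\<omega> \<in> A. \<forall>h \<in> H.
             eps \<mu>t h f \<le> eps \<mu>s h f
               + 2 * K * enn2real (W1 (emp_measure Ns (fst \<omega>)) (emp_measure Nt (snd \<omega>)))
               + lam
               + 2 * K * sqrt (2 * ln (1 / \<delta>) / \<kappa>') * (sqrt (1 / real Ns) + sqrt (1 / real Nt))))"
  proof (intro exI[of _ 1] allI impI)
    fix \<delta> :: real and Ns Nt :: nat
    assume asm: "0 < \<delta> \<and> real (min Ns Nt) \<ge> 1 * max (\<delta> powr (-(d' + 2))) 1"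
    then have \<delta>: "\<delta> > 0" by simp
    from asm have "real (min Ns Nt) \<ge> 1" by (smt (verit) max.cobounded2)
    then have Ns: "Ns > 0" and Nt: "Nt > 0" by auto
    define P where "P = (PiM {..<Ns} (\<lambda>_. \<mu>s)) \<Otimes>\<^sub>M (PiM {..<Nt} (\<lambda>_. \<mu>t))"
    have psP: "prob_space P" unfolding P_def
      by (intro prob_space_pair prob_space_PiM) (use ps pt in auto)
    interpret P: prob_space P by (rule psP)
    have mc_s: "measurable \<mu>s borel = measurable borel borel" using measurable_cong_sets[OF ps(2) refl] .
    have mc_t: "measurable \<mu>t borel = measurable borel borel" using measurable_cong_sets[OF pt(2) refl] .
    have Hm: "h \<in> borel_measurable borel" if "h \<in> H" for h
      using H_lip[OF that] by (intro borel_measurable_continuous_onI lipschitz_on_continuous_on)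
    have Hb: "\<bar>h x\<bar> \<le> 1" if "h \<in> H" for h x using H_range[OF that, of x] by auto
    have fb: "\<bar>f x\<bar> \<le> 1" for x using f_range[of x] by auto
    define D where "D h = (\<integral>x. \<bar>h x - hstar x\<bar> \<partial>\<mu>t) - (\<integral>x. \<bar>h x - hstar x\<bar> \<partial>\<mu>s)" for h
    have detD: "eps \<mu>t h f \<le> eps \<mu>s h f + lam + D h" if h: "h \<in> H" for h
    proof -
      have "eps \<mu>t h f \<le> eps \<mu>t hstar f + (\<integral>x. \<bar>h x - hstar x\<bar> \<partial>\<mu>t)"
        by (rule det_tri(1)[OF pt(1)]) (use Hm[OF h] Hm[OF hstar_in] f_meas Hb[OF h] Hb[OF hstar_in] fb mc_s mc_t in auto)
      moreover have "(\<integral>x. \<bar>h x - hstar x\<bar> \<partial>\<mu>s) \<le> eps \<mu>s h f + eps \<mu>s hstar f"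
        by (rule det_tri(2)[OF ps(1)]) (use Hm[OF h] Hm[OF hstar_in] f_meas Hb[OF h] Hb[OF hstar_in] fb mc_s mc_t in auto)
      ultimately show ?thesis unfolding D_def lam_def by simp
    qed
    have main: "\<exists>A \<in> sets P. measure P A \<ge> 1 - \<delta> \<and>
          (\<forall>\<omega> \<in> A. \<forall>h \<in> H.
             eps \<mu>t h f \<le> eps \<mu>s h f
               + 2 * K * enn2real (W1 (emp_measure Ns (fst \<omega>)) (emp_measure Nt (snd \<omega>)))
               + lam
               + 2 * K * sqrt (2 * ln (1 / \<delta>) / \<kappa>') * (sqrt (1 / real Ns) + sqrt (1 / real Nt)))"
    proof (cases "\<delta> < 1 \<and> H \<noteq> {} \<and> K \<noteq> 0")
      case False
      show ?thesis
      proof (cases "\<delta> \<ge> 1")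
        case True
        show ?thesis by (intro bexI[of _ "{}"]) (use True in auto)
      next
        case dl: False
        show ?thesis
        proof (intro bexI[of _ "space P"] conjI ballI)
          show "1 - \<delta> \<le> measure P (space P)" using \<delta> by (simp add: P.prob_space)
          fix \<omega> h assume h: "h \<in> H"
          with False dl have K0: "K = 0" by auto
          have hc: "h x = h 0" for x using lipschitz_onD[OF H_lip[OF h], of x 0] K0 by simp
          have hsc: "hstar x = hstar 0" for x using lipschitz_onD[OF H_lip[OF hstar_in], of x 0] K0 by simp
          have "D h = 0" unfolding D_def
            by (subst hc, subst hsc, subst (2) hc, subst (2) hsc)
              (simp add: prob_space.prob_space[OF ps(1)] prob_space.prob_space[OF pt(1)])
          then show "eps \<mu>t h f \<le> eps \<mu>s h f
               + 2 * K * enn2real (W1 (emp_measure Ns (fst \<omega>)) (emp_measure Nt (snd \<omega>)))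
               + lam
               + 2 * K * sqrt (2 * ln (1 / \<delta>) / \<kappa>') * (sqrt (1 / real Ns) + sqrt (1 / real Nt))"
            using detD[OF h] K0 by simp
        qed simp
      qed
    next
      case True
      then have \<delta>1: "\<delta> < 1" and Hne: "H \<noteq> {}" and K0: "K \<noteq> 0" by auto
      from Hne obtain h1 where "h1 \<in> H" by auto
      then have "K \<ge> 0" using H_lip lipschitz_on_nonneg by blast
      with K0 have K: "K > 0" by simp
      define L where "L = 2 * K"
      have L: "L > 0" unfolding L_def using K by simp
      define a where "a = sqrt (1 / real Ns)"
      define b where "b = sqrt (1 / real Nt)"
      define c where "c = 1 / real Ns + 1 / real Nt"
      have ab: "a > 0" "b > 0" unfolding a_def b_def using Ns Nt by auto
      have c_ab: "c \<le> (a + b)^2" unfolding c_def a_def b_def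
        by (simp add: power2_sum)
      have c: "c > 0" unfolding c_def using Ns Nt by (simp add: add_pos_pos)
      have lnpos: "ln (1 / \<delta>) > 0" using \<delta> \<delta>1 by simp
      define r where "r = sqrt (2 * ln (1 / \<delta>) / \<kappa>') * (a + b)"
      have r: "r > 0" unfolding r_def using lnpos \<kappa>' ab by simp
      define \<theta> where "\<theta> = sqrt (\<kappa>' / \<kappa>)"
      have \<theta>: "0 < \<theta>" "\<theta> < 1" unfolding \<theta>_def using \<kappa>' \<kappa> by auto
      define t where "t = \<theta> * L * r"
      define \<eta> where "\<eta> = (1 - \<theta>) * L * r"
      have t: "t > 0" unfolding t_def using \<theta> L r by simp
      have \<eta>: "\<eta> > 0" unfolding \<eta>_def using \<theta> L r by simp
      have gH01: "0 \<le> \<bar>h x - hstar x\<bar>" "\<bar>h x - hstar x\<bar> \<le> 1" if "h \<in> H" for h x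
        using H_range[OF that, of x] H_range[OF hstar_in, of x] by auto
      have gHm_s: "(\<lambda>x. \<bar>h x - hstar x\<bar>) \<in> borel_measurable \<mu>s" if "h \<in> H" for h
        unfolding mc_s using Hm[OF that] Hm[OF hstar_in] by measurable
      have gHm_t: "(\<lambda>x. \<bar>h x - hstar x\<bar>) \<in> borel_measurable \<mu>t" if "h \<in> H" for h
        unfolding mc_t using Hm[OF that] Hm[OF hstar_in] by measurable
      have Dle1: "D h \<le> 1" if "h \<in> H" for h
        using int01(2)[OF pt(1) gHm_t[OF that] gH01(1)[OF that] gH01(2)[OF that]]
          int01(1)[OF ps(1) gHm_s[OF that] gH01(1)[OF that] gH01(2)[OF that]]
        unfolding D_def by linarith
      have bdd: "bdd_above (D ` H)" using Dle1 by (auto intro!: bdd_aboveI)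
      have "(SUP h\<in>H. D h) - \<eta> < (SUP h\<in>H. D h)" using \<eta> by simp
      then obtain h0 where h0: "h0 \<in> H" and h0D: "(SUP h\<in>H. D h) - \<eta> < D h0"
        using less_cSUP_iff[OF Hne bdd] by blast
      have Dle: "D h \<le> D h0 + \<eta>" if "h \<in> H" for h
        using cSUP_upper[OF that bdd] h0D by simp
      define g0 where "g0 x = \<bar>h0 x - hstar x\<bar>" for x
      have g0m: "g0 \<in> borel_measurable borel" unfolding g0_def using Hm[OF h0] Hm[OF hstar_in] by measurable
      have g0b: "\<bar>g0 x\<bar> \<le> 1" for x unfolding g0_def using gH01[OF h0, of x] by simp
      have g0lip: "\<bar>g0 x - g0 y\<bar> \<le> L * dist x y" for x y
      proof -
        have "\<bar>g0 x - g0 y\<bar> \<le> \<bar>h0 x - h0 y\<bar> + \<bar>hstar x - hstar y\<bar>" unfolding g0_def by linarith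
        also have "\<dots> \<le> K * dist x y + K * dist x y"
          using lipschitz_onD[OF H_lip[OF h0], of x y] lipschitz_onD[OF H_lip[OF hstar_in], of x y]
          by (simp add: dist_real_def)
        finally show ?thesis unfolding L_def by simp
      qed
      define Q where "Q = (\<lambda>\<omega>. (\<Sum>i<Ns. (g0 (fst \<omega> i) - (\<integral>x. g0 x \<partial>\<mu>s)) / Ns) + (\<Sum>j<Nt. ((\<integral>x. g0 x \<partial>\<mu>t) - g0 (snd \<omega> j)) / Nt))"
      note CC = conc[OF ps(1) ps(2) T1s pt(1) pt(2) T1t \<kappa> g0m g0b g0lip L Ns Nt t, folded P_def Q_def]
      define Bad where "Bad = {\<omega>\<in>space P. t \<le> Q \<omega>}"
      have Bad: "Bad \<in> sets P" unfolding Bad_def using CC(1) by measurable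
      have "exp (-(t^2*\<kappa>/(2*L^2*(1/real Ns+1/real Nt)))) \<le> \<delta>"
      proof -
        have "t^2 = \<theta>^2 * L^2 * r^2" unfolding t_def by (simp add: power_mult_distrib)
        also have "\<theta>^2 = \<kappa>' / \<kappa>" unfolding \<theta>_def using \<kappa>' \<kappa> by simp
        also have "r^2 = 2 * ln (1 / \<delta>) / \<kappa>' * (a + b)^2" unfolding r_def using lnpos \<kappa>'
          by (simp add: power_mult_distrib)
        finally have t2: "t^2 = \<kappa>' / \<kappa> * L^2 * (2 * ln (1 / \<delta>) / \<kappa>' * (a + b)^2)" .
        have "t^2*\<kappa>/(2*L^2*(1/real Ns+1/real Nt)) = ln (1 / \<delta>) * ((a + b)^2 / c)"
          unfolding t2 c_def[symmetric] using \<kappa>' \<kappa> L c by (simp add: field_simps)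
        also have "\<dots> \<ge> ln (1 / \<delta>) * 1"
          using c_ab c lnpos by (intro mult_left_mono) (auto simp: le_divide_eq)
        finally have "ln (1/\<delta>) \<le> t^2*\<kappa>/(2*L^2*(1/real Ns+1/real Nt))" by simp
        then have "exp (-(t^2*\<kappa>/(2*L^2*(1/real Ns+1/real Nt)))) \<le> exp (- ln (1/\<delta>))" by simp
        also have "\<dots> = \<delta>" using \<delta> by (simp add: ln_div exp_minus)
        finally show ?thesis .
      qed
      then have "emeasure P Bad \<le> ennreal \<delta>"
      proof -
        have "emeasure P Bad \<le> ennreal (exp (-(t^2*\<kappa>/(2*L^2*(1/real Ns+1/real Nt)))))"
          using CC(2) unfolding Bad_def Q_def by simp
        then show ?thesis using \<open>exp _ \<le> \<delta>\<close> by (meson ennreal_leI order_trans)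
      qed
      then have mBad: "measure P Bad \<le> \<delta>" using \<delta> by (simp add: P.emeasure_eq_measure)
      show ?thesis
      proof (intro bexI[of _ "space P - Bad"] conjI ballI)
        show "space P - Bad \<in> sets P" using Bad by auto
        show "1 - \<delta> \<le> measure P (space P - Bad)" using P.prob_compl[OF Bad] mBad by simp
        fix \<omega> h assume \<omega>: "\<omega> \<in> space P - Bad" and h: "h \<in> H"
        then have Qlt: "Q \<omega> < t" unfolding Bad_def by auto
        define ms where "ms = (\<integral>x. g0 x \<partial>\<mu>s)"
        define mt where "mt = (\<integral>x. g0 x \<partial>\<mu>t)"
        have es: "(\<integral>x. g0 x \<partial>emp_measure Ns (fst \<omega>)) = (\<Sum>i<Ns. g0 (fst \<omega> i)) / Ns"
          by (rule emp_basic(3)[OF Ns g0m])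
        have et: "(\<integral>x. g0 x \<partial>emp_measure Nt (snd \<omega>)) = (\<Sum>i<Nt. g0 (snd \<omega> i)) / Nt"
          by (rule emp_basic(3)[OF Nt g0m])
        have Qeq: "Q \<omega> = (mt - ms) - ((\<integral>x. g0 x \<partial>emp_measure Nt (snd \<omega>)) - (\<integral>x. g0 x \<partial>emp_measure Ns (fst \<omega>)))"
          unfolding es et Q_def ms_def[symmetric] mt_def[symmetric] using Ns Nt
          by (simp add: sum_divide_distrib[symmetric] sum_subtractf diff_divide_distrib)
        have kk: "(\<integral>x. g0 x \<partial>emp_measure Nt (snd \<omega>)) - (\<integral>x. g0 x \<partial>emp_measure Ns (fst \<omega>))
          \<le> L * enn2real (W1 (emp_measure Ns (fst \<omega>)) (emp_measure Nt (snd \<omega>)))"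
          by (rule kant_emp[OF g0m g0b g0lip L Ns Nt])
        have Dh0: "D h0 = mt - ms" unfolding D_def ms_def mt_def g0_def ..
        have "eps \<mu>t h f \<le> eps \<mu>s h f + lam + D h" by (rule detD[OF h])
        also have "\<dots> \<le> eps \<mu>s h f + lam + (D h0 + \<eta>)" using Dle[OF h] by simp
        also have "\<dots> \<le> eps \<mu>s h f + lam + (L * enn2real (W1 (emp_measure Ns (fst \<omega>)) (emp_measure Nt (snd \<omega>))) + L * r)"
          using Qlt Qeq kk Dh0 unfolding t_def \<eta>_def by (simp add: algebra_simps)
        finally show "eps \<mu>t h f \<le> eps \<mu>s h f
               + 2 * K * enn2real (W1 (emp_measure Ns (fst \<omega>)) (emp_measure Nt (snd \<omega>)))
               + lam
               + 2 * K * sqrt (2 * ln (1 / \<delta>) / \<kappa>') * (sqrt (1 / real Ns) + sqrt (1 / real Nt))"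
          unfolding L_def r_def a_def b_def by (simp add: algebra_simps)
      qed
    qed
    then show "let P = (PiM {..<Ns} (\<lambda>_. \<mu>s)) \<Otimes>\<^sub>M (PiM {..<Nt} (\<lambda>_. \<mu>t)) in
        \<exists>A \<in> sets P. measure P A \<ge> 1 - \<delta> \<and>
          (\<forall>\<omega> \<in> A. \<forall>h \<in> H.
             eps \<mu>t h f \<le> eps \<mu>s h f
               + 2 * K * enn2real (W1 (emp_measure Ns (fst \<omega>)) (emp_measure Nt (snd \<omega>)))
               + lam
               + 2 * K * sqrt (2 * ln (1 / \<delta>) / \<kappa>') * (sqrt (1 / real Ns) + sqrt (1 / real Nt)))"
      unfolding Let_def P_def .
  qed
qed

end
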